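(* Let $\mathcal{R}$ be a right amenable cell space with finite stabiliser $G_0$, let $(\mathcal{R},Q,N,\delta)$ be a semi-cellular automaton with $Q$ finite, $N$ finite, whose global transition function is $\Delta$, and let $\mathcal{F}=(F_i)_{i\in I}$ be a right Følner net in $\mathcal{R}$. Suppose $\delta$ is $\bullet$-invariant, $Q$ contains at least two elements, and $\Delta$ is not surjective. Then $\mathrm{h}_{\mathcal{F}}(\Delta(Q^M))<\log|Q|$.
   Context: A cell space $\mathcal{R}$ consists of a group $G$ acting transitively on the left on a nonempty set $M$ via $\triangleright$, a point $m_0\in M$ and a family $(g_{m_0,m})_{m\in M}$ in $G$ with $g_{m_0,m}\triangleright m_0=m$. $G_0$ is the stabiliser of $m_0$, $G/G_0$ the set of left cosets, with $G$ acting by $g\cdot hG_0=ghG_0$. The right semi-action $\triangleleft\colon M\times G/G_0\to M$ is $m\triangleleft gG_0=g_{m_0,m}g\triangleright m_0$. $\mathcal{R}$ is right amenable if there is a finitely additive probability measure $\mu$ on the power set of $M$ such that $\mu(\{a\triangleleft\mathfrak{g}:a\in A\})=\mu(A)$ whenever $\mathfrak{g}\in G/G_0$, $A\subseteq M$ and $m\mapsto m\triangleleft\mathfrak{g}$ is injective on $A$. A right Følner net in $\mathcal{R}$ is a net $(F_i)_{i\in I}$ (over a directed set) of nonempty finite subsets of $M$ with $\lim_{i}\frac{|F_i\setminus\{m: m\triangleleft\mathfrak{g}\in F_i\}|}{|F_i|}=0$ for every $\mathfrak{g}\in G/G_0$. A semi-cellular automaton is $(\mathcal{R},Q,N,\delta)$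 with $Q$ a set, $N\subseteq G/G_0$ with $G_0\cdot N\subseteq N$, $\delta\colon Q^N\to Q$; its global transition function is $\Delta(c)(m)=\delta(n\mapsto c(m\triangleleft n))$. $\delta$ is $\bullet$-invariant if $\delta(g_0\bullet\ell)=\delta(\ell)$ for all $g_0\in G_0$, $\ell\in Q^N$, where $(g_0\bullet\ell)(n)=\ell(g_0^{-1}\cdot n)$. For $A\subseteq M$, $\pi_A\colon Q^M\to Q^A$ is restriction. For $X\subseteq Q^M$, $\mathrm{h}_{\mathcal{F}}(X)=\limsup_{i\in I}\frac{\log|\pi_{F_i}(X)|}{|F_i|}$. *)

theory Defs
  imports Complex_Main "HOL-Algebra.Coset" "HOL-Library.Extended_Real" "HOL-Library.Liminf_Limsup" "HOL-Library.FuncSet"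
begin

(* Cell space: group G acting on the left on the (type) M = UNIV :: 'm set via act,
   base point m0, family gfam with gfam m \<in> carrier G and act (gfam m) m0 = m. *)
definition cell_space :: "('g, 'b) monoid_scheme \<Rightarrow> ('g \<Rightarrow> 'm \<Rightarrow> 'm) \<Rightarrow> 'm \<Rightarrow> ('m \<Rightarrow> 'g) \<Rightarrow> bool" where
  "cell_space G act m0 gfam \<longleftrightarrow>
     group G \<and>
     (\<forall>m. act \<one>\<^bsub>G\<^esub> m = m) \<and>
     (\<forall>g\<in>carrier G. \<forall>h\<in>carrier G. \<forall>m. act (g \<otimes>\<^bsub>G\<^esub> h) m = act g (act h m)) \<and>
     (\<forall>m. \<exists>g\<in>carrier G. act g m0 = m) \<and>
     (\<forall>m. gfam m \<in> carrier G \<and> act (gfam m) m0 = m)"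

definition stab :: "('g, 'b) monoid_scheme \<Rightarrow> ('g \<Rightarrow> 'm \<Rightarrow> 'm) \<Rightarrow> 'm \<Rightarrow> 'g set" where
  "stab G act m0 = {g \<in> carrier G. act g m0 = m0}"

definition cosets :: "('g, 'b) monoid_scheme \<Rightarrow> ('g \<Rightarrow> 'm \<Rightarrow> 'm) \<Rightarrow> 'm \<Rightarrow> 'g set set" where
  "cosets G act m0 = {g <#\<^bsub>G\<^esub> stab G act m0 | g. g \<in> carrier G}"

(* right semi-action m \<triangleleft> gG_0 = g_{m0,m} g \<triangleright> m0 (independent of representative g) *)
definition rsemi :: "('g, 'b) monoid_scheme \<Rightarrow> ('g \<Rightarrow> 'm \<Rightarrow> 'm) \<Rightarrow> 'm \<Rightarrow> ('m \<Rightarrow> 'g) \<Rightarrow> 'm \<Rightarrow> 'g set \<Rightarrow> 'm" where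
  "rsemi G act m0 gfam m c =
     act (gfam m \<otimes>\<^bsub>G\<^esub> (SOME g. g \<in> carrier G \<and> c = g <#\<^bsub>G\<^esub> stab G act m0)) m0"

definition right_amenable :: "('g, 'b) monoid_scheme \<Rightarrow> ('g \<Rightarrow> 'm \<Rightarrow> 'm) \<Rightarrow> 'm \<Rightarrow> ('m \<Rightarrow> 'g) \<Rightarrow> bool" where
  "right_amenable G act m0 gfam \<longleftrightarrow>
     (\<exists>\<mu> :: 'm set \<Rightarrow> real.
        (\<forall>A. 0 \<le> \<mu> A) \<and> \<mu> UNIV = 1 \<and>
        (\<forall>A B. A \<inter> B = {} \<longrightarrow> \<mu> (A \<union> B) = \<mu> A + \<mu> B) \<and>
        (\<forall>c\<in>cosets G act m0. \<forall>A. inj_on (\<lambda>m. rsemi G act m0 gfam m c) A \<longrightarrow>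
              \<mu> ((\<lambda>m. rsemi G act m0 gfam m c) ` A) = \<mu> A))"

definition directed_set :: "('i \<Rightarrow> 'i \<Rightarrow> bool) \<Rightarrow> bool" where
  "directed_set rel \<longleftrightarrow> (\<forall>i. rel i i) \<and> (\<forall>i j k. rel i j \<longrightarrow> rel j k \<longrightarrow> rel i k)
      \<and> (\<forall>i j. \<exists>k. rel i k \<and> rel j k)"

definition net_filter :: "('i \<Rightarrow> 'i \<Rightarrow> bool) \<Rightarrow> 'i filter" where
  "net_filter rel = (INF i. principal {j. rel i j})"

definition right_folner_net ::
  "('g, 'b) monoid_scheme \<Rightarrow> ('g \<Rightarrow> 'm \<Rightarrow> 'm) \<Rightarrow> 'm \<Rightarrow> ('m \<Rightarrow> 'g) \<Rightarrow> ('i \<Rightarrow> 'i \<Rightarrow> bool) \<Rightarrow> ('i \<Rightarrow> 'm set) \<Rightarrow> bool" where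
  "right_folner_net G act m0 gfam rel F \<longleftrightarrow>
     directed_set rel \<and>
     (\<forall>i. finite (F i) \<and> F i \<noteq> {}) \<and>
     (\<forall>c\<in>cosets G act m0.
        ((\<lambda>i. real (card (F i - {m. rsemi G act m0 gfam m c \<in> F i})) / real (card (F i)))
            \<longlongrightarrow> 0) (net_filter rel))"

(* semi-cellular automaton (R, Q, N, delta) with Q = UNIV :: 'q set *)
definition semi_cellular_automaton ::
  "('g, 'b) monoid_scheme \<Rightarrow> ('g \<Rightarrow> 'm \<Rightarrow> 'm) \<Rightarrow> 'm \<Rightarrow> 'g set set \<Rightarrow> bool" where
  "semi_cellular_automaton G act m0 N \<longleftrightarrow>
     N \<subseteq> cosets G act m0 \<and>
     (\<forall>g0\<in>stab G act m0. \<forall>n\<in>N. g0 <#\<^bsub>G\<^esub> n \<in> N)"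

(* local configurations Q^N are N \<rightarrow>\<^sub>E UNIV; delta :: Q^N \<Rightarrow> Q *)
definition global_transition ::
  "('g, 'b) monoid_scheme \<Rightarrow> ('g \<Rightarrow> 'm \<Rightarrow> 'm) \<Rightarrow> 'm \<Rightarrow> ('m \<Rightarrow> 'g) \<Rightarrow> 'g set set
     \<Rightarrow> (('g set \<Rightarrow> 'q) \<Rightarrow> 'q) \<Rightarrow> ('m \<Rightarrow> 'q) \<Rightarrow> ('m \<Rightarrow> 'q)" where
  "global_transition G act m0 gfam N \<delta> c = (\<lambda>m. \<delta> (restrict (\<lambda>n. c (rsemi G act m0 gfam m n)) N))"

(* bullet-invariance: (g0 \<bullet> l)(n) = l(g0^{-1} \<cdot> n) *)
definition bullet_invariant ::
  "('g, 'b) monoid_scheme \<Rightarrow> ('g \<Rightarrow> 'm \<Rightarrow> 'm) \<Rightarrow> 'm \<Rightarrow> 'g set set \<Rightarrow> (('g set \<Rightarrow> 'q) \<Rightarrow> 'q) \<Rightarrow> bool" where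
  "bullet_invariant G act m0 N \<delta> \<longleftrightarrow>
     (\<forall>g0\<in>stab G act m0. \<forall>l\<in>N \<rightarrow>\<^sub>E (UNIV :: 'q set).
        \<delta> (restrict (\<lambda>n. l (inv\<^bsub>G\<^esub> g0 <#\<^bsub>G\<^esub> n)) N) = \<delta> l)"

definition entropy :: "('i \<Rightarrow> 'i \<Rightarrow> bool) \<Rightarrow> ('i \<Rightarrow> 'm set) \<Rightarrow> ('m \<Rightarrow> 'q) set \<Rightarrow> ereal" where
  "entropy rel F X =
     Limsup (net_filter rel) (\<lambda>i. ereal (ln (real (card ((\<lambda>c. restrict c (F i)) ` X))) / real (card (F i))))"

end

theory Submission
  imports Defs "HOL-Analysis.Analysis"
begin


lemma compact_realize:
  fixes Phi :: "('m \<Rightarrow> 'q::finite) \<Rightarrow> 'm \<Rightarrow> 'q" and D :: "'m \<Rightarrow> 'm set" and y :: "'m \<Rightarrow> 'q"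
  assumes finD: "\<And>m. finite (D m)"
    and loc: "\<And>c c' m. (\<forall>x\<in>D m. c x = c' x) \<Longrightarrow> Phi c m = Phi c' m"
    and fin: "\<And>E. finite E \<Longrightarrow> \<exists>c. \<forall>m\<in>E. Phi c m = y m"
  shows "\<exists>c. Phi c = y"
proof -
  define X where "X = product_topology (\<lambda>_::'m. discrete_topology (UNIV::'q set)) UNIV"
  have top: "topspace X = UNIV" unfolding X_def by (auto simp: PiE_def extensional_def)
  have cs: "compact_space X" unfolding X_def
    by (simp add: compact_space_product_topology compact_space_discrete_topology)
  have cyl: "openin X {c'. c' x = a}" for x a
  proof -
    have "openin X {c' \<in> topspace X. c' x \<in> {a}}"
      unfolding X_def by (rule openin_continuous_map_preimage[OF continuous_map_product_projection]) auto
    then show ?thesis using top by simp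
  qed
  define C where "C m = {c. Phi c m = y m}" for m
  have cl: "closedin X (C m)" for m
  proof -
    have "UNIV - C m = (\<Union>c\<in>UNIV - C m. \<Inter>x\<in>D m. {c'. c' x = c x}) \<inter> UNIV"
    proof (intro equalityI subsetI)
      fix c assume "c \<in> UNIV - C m"
      then show "c \<in> (\<Union>c\<in>UNIV - C m. \<Inter>x\<in>D m. {c'. c' x = c x}) \<inter> UNIV" by blast
    next
      fix c assume "c \<in> (\<Union>c\<in>UNIV - C m. \<Inter>x\<in>D m. {c'. c' x = c x}) \<inter> UNIV"
      then obtain c' where "c' \<in> UNIV - C m" "\<forall>x\<in>D m. c x = c' x" by blast
      then show "c \<in> UNIV - C m" using loc[of m c c'] by (auto simp: C_def)
    qed
    also have "openin X \<dots>"
    proof (cases "D m = {}")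
      case True
      then show ?thesis using top by (simp add: openin_topspace[of X, simplified top] openin_Union)
    next
      case False
      show ?thesis apply (subst Int_UNIV_right)
        apply (rule openin_Union) using False finD cyl by (auto intro!: openin_INT2)
    qed
    finally show ?thesis unfolding closedin_def using top by (simp add: Compl_eq_Diff_UNIV)
  qed
  have "\<Inter>(range C) \<noteq> {}"
    using cs unfolding compact_space_fip
  proof (elim allE impE)
    show "(\<forall>K\<in>range C. closedin X K) \<and> (\<forall>\<F>. finite \<F> \<and> \<F> \<subseteq> range C \<longrightarrow> \<Inter> \<F> \<noteq> {})"
    proof (intro conjI allI impI ballI)
      fix \<F> assume "finite \<F> \<and> \<F> \<subseteq> range C"
      then obtain E where E: "finite E" "\<F> = C ` E" by (meson finite_subset_image)
      from fin[OF E(1)] obtain c where "\<forall>m\<in>E. Phi c m = y m" by blast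
      then have "c \<in> \<Inter>\<F>" using E by (auto simp: C_def)
      then show "\<Inter>\<F> \<noteq> {}" by blast
    qed (use cl in auto)
  qed auto
  then obtain c where "\<forall>m. c \<in> C m" by blast
  then show ?thesis by (auto simp: C_def)
qed



locale cs_ctx =
  fixes G :: "('g, 'b) monoid_scheme" (structure) and act :: "'g \<Rightarrow> 'm \<Rightarrow> 'm" and m0 :: 'm and gfam :: "'m \<Rightarrow> 'g"
  assumes cs: "cell_space G act m0 gfam"
begin

lemma grp: "group G" using cs unfolding cell_space_def by blast
lemma act_one[simp]: "act \<one>\<^bsub>G\<^esub> m = m" using cs unfolding cell_space_def by blast
lemma act_mult: "g \<in> carrier G \<Longrightarrow> h \<in> carrier G \<Longrightarrow> act (g \<otimes>\<^bsub>G\<^esub> h) m = act g (act h m)"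
  using cs unfolding cell_space_def by blast
lemma gfam_carrier[simp]: "gfam m \<in> carrier G" using cs unfolding cell_space_def by blast
lemma gfam_act[simp]: "act (gfam m) m0 = m" using cs unfolding cell_space_def by blast

lemma act_inv[simp]: "g \<in> carrier G \<Longrightarrow> act (inv\<^bsub>G\<^esub> g) (act g x) = x"
proof -
  assume g: "g \<in> carrier G"
  interpret group G by (rule grp)
  have "act (inv g) (act g x) = act (inv g \<otimes> g) x" by (simp only: act_mult[OF inv_closed[OF g] g])
  also have "\<dots> = x" using g by simp
  finally show ?thesis .
qed

lemma act_inj: "g \<in> carrier G \<Longrightarrow> inj (act g)"
  by (metis act_inv injI)

lemma stab_carrier: "stab G act m0 \<subseteq> carrier G" unfolding stab_def by blast

lemma one_stab: "\<one>\<^bsub>G\<^esub> \<in> stab G act m0"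
proof -
  interpret group G by (rule grp)
  show ?thesis unfolding stab_def by simp
qed

lemma inv_stab: "g \<in> stab G act m0 \<Longrightarrow> inv\<^bsub>G\<^esub> g \<in> stab G act m0"
proof -
  assume g: "g \<in> stab G act m0"
  interpret group G by (rule grp)
  have gc: "g \<in> carrier G" and "act g m0 = m0" using g unfolding stab_def by auto
  then have "act (inv g) m0 = act (inv g) (act g m0)" by simp
  also have "\<dots> = m0" using gc by simp
  finally show ?thesis using gc unfolding stab_def by simp
qed

lemma rsemi_rep:
  assumes h: "h \<in> carrier G" and c: "c = h <#\<^bsub>G\<^esub> stab G act m0"
  shows "rsemi G act m0 gfam x c = act (gfam x \<otimes>\<^bsub>G\<^esub> h) m0"
proof -
  interpret group G by (rule grp)
  define S where "S = stab G act m0"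
  define r where "r = (SOME g. g \<in> carrier G \<and> c = g <# S)"
  have "\<exists>g. g \<in> carrier G \<and> c = g <# S" using h c S_def by blast
  then have r: "r \<in> carrier G" "c = r <# S" unfolding r_def by (metis (mono_tags, lifting) someI_ex)+
  have "h \<in> h <# S" using h one_stab unfolding l_coset_def S_def by force
  then have "h \<in> r <# S" using c r S_def by simp
  then obtain g0 where g0: "g0 \<in> S" "h = r \<otimes> g0" unfolding l_coset_def by blast
  have g0c: "g0 \<in> carrier G" "act g0 m0 = m0" using g0 unfolding S_def stab_def by auto
  have "act (gfam x \<otimes> h) m0 = act (gfam x \<otimes> r) (act g0 m0)"
    using g0 g0c r by (simp add: act_mult m_assoc)
  also have "\<dots> = act (gfam x \<otimes> r) m0" using g0c by simp
  finally show ?thesis unfolding rsemi_def r_def S_def by simp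
qed

lemma lcos_assoc:
  assumes "g \<in> carrier G" "h \<in> carrier G"
  shows "g <#\<^bsub>G\<^esub> (h <#\<^bsub>G\<^esub> stab G act m0) = (g \<otimes>\<^bsub>G\<^esub> h) <#\<^bsub>G\<^esub> stab G act m0"
proof -
  interpret group G by (rule grp)
  show ?thesis using assms stab_carrier unfolding l_coset_def by (auto; metis m_assoc subsetD)
qed

lemma equivariance:
  fixes \<delta> :: "('g set \<Rightarrow> 'q) \<Rightarrow> 'q" and c :: "'m \<Rightarrow> 'q"
  assumes sca: "semi_cellular_automaton G act m0 N"
    and bi: "bullet_invariant G act m0 N \<delta>"
    and g: "g \<in> carrier G"
  shows "global_transition G act m0 gfam N \<delta> (\<lambda>x. c (act g x)) e
       = global_transition G act m0 gfam N \<delta> c (act g e)"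
proof -
  interpret group G by (rule grp)
  define S where "S = stab G act m0"
  define g0 where "g0 = inv (gfam (act g e)) \<otimes> g \<otimes> gfam e"
  have g0c: "g0 \<in> carrier G" unfolding g0_def using g by simp
  have "act g0 m0 = act (inv (gfam (act g e))) (act g (act (gfam e) m0))"
    unfolding g0_def using g by (simp add: act_mult)
  also have "\<dots> = act (inv (gfam (act g e))) (act (gfam (act g e)) m0)" by simp
  also have "\<dots> = m0" by (rule act_inv[OF gfam_carrier])
  finally have g0s: "g0 \<in> S" using g0c unfolding S_def stab_def by simp
  have eq: "gfam (act g e) \<otimes> g0 = g \<otimes> gfam e"
    unfolding g0_def using g by (simp add: m_assoc[symmetric])
  define l where "l = restrict (\<lambda>n. c (rsemi G act m0 gfam (act g e) n)) N"
  have lP: "l \<in> N \<rightarrow>\<^sub>E (UNIV :: 'q set)" unfolding l_def by simp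
  have key: "l (g0 <# n) = c (act g (rsemi G act m0 gfam e n))" if n: "n \<in> N" for n
  proof -
    have "n \<in> cosets G act m0" using sca n unfolding semi_cellular_automaton_def by blast
    then obtain h where h: "h \<in> carrier G" "n = h <# S" unfolding cosets_def S_def by blast
    have "g0 <# n \<in> N" using sca n g0s unfolding semi_cellular_automaton_def S_def by blast
    then have "l (g0 <# n) = c (rsemi G act m0 gfam (act g e) (g0 <# n))" unfolding l_def by simp
    also have "g0 <# n = (g0 \<otimes> h) <# S" using h g0c lcos_assoc S_def by simp
    also have "rsemi G act m0 gfam (act g e) ((g0 \<otimes> h) <# S) = act (gfam (act g e) \<otimes> (g0 \<otimes> h)) m0"
      using rsemi_rep g0c h S_def by simp
    also have "gfam (act g e) \<otimes> (g0 \<otimes> h) = g \<otimes> (gfam e \<otimes> h)"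
      using eq g0c h g by (metis gfam_carrier m_assoc)
    also have "act (g \<otimes> (gfam e \<otimes> h)) m0 = act g (rsemi G act m0 gfam e n)"
      using rsemi_rep h g S_def by (simp add: act_mult)
    finally have "l ((g0 \<otimes> h) <# S) = c (act g (rsemi G act m0 gfam e n))" .
    then show ?thesis using h g0c lcos_assoc S_def by simp
  qed
  have "inv g0 \<in> stab G act m0" using inv_stab g0s S_def by simp
  then have "\<delta> (restrict (\<lambda>n. l (inv (inv g0) <# n)) N) = \<delta> l"
    using bi lP unfolding bullet_invariant_def by blast
  moreover have "restrict (\<lambda>n. l (inv (inv g0) <# n)) N = restrict (\<lambda>n. c (act g (rsemi G act m0 gfam e n))) N"
    using key g0c by (auto simp: restrict_def)
  ultimately show ?thesis unfolding global_transition_def l_def by simp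
qed

end


context cs_ctx begin
lemma overlap:
  assumes "a \<in> E" "b \<in> E" "act (gfam t) a = act (gfam u) b"
  shows "t \<in> act (gfam u) ` ((\<lambda>(a,b,g0). act (gfam b \<otimes> g0 \<otimes> inv (gfam a)) m0) ` (E \<times> E \<times> stab G act m0))"
proof -
  interpret group G by (rule grp)
  define h where "h = gfam u \<otimes> gfam b"
  have hc: "h \<in> carrier G" unfolding h_def by simp
  have hm: "act h m0 = act (gfam u) b" unfolding h_def by (simp add: act_mult)
  define g0 where "g0 = inv h \<otimes> gfam t \<otimes> gfam a"
  have g0c: "g0 \<in> carrier G" unfolding g0_def using hc by simp
  have "act g0 m0 = act (inv h) (act (gfam t) (act (gfam a) m0))"
    unfolding g0_def using hc by (simp add: act_mult)
  also have "\<dots> = act (inv h) (act h m0)" using assms(3) hm by simp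
  also have "\<dots> = m0" using hc by simp
  finally have g0s: "g0 \<in> stab G act m0" using g0c unfolding stab_def by simp
  have "h \<otimes> g0 = gfam t \<otimes> gfam a" unfolding g0_def using hc
    by (simp add: m_assoc[symmetric])
  then have "gfam t = h \<otimes> g0 \<otimes> inv (gfam a)" using hc g0c
    by (simp add: m_assoc)
  then have "t = act (h \<otimes> g0 \<otimes> inv (gfam a)) m0" by (metis gfam_act)
  also have "\<dots> = act (gfam u) (act (gfam b \<otimes> g0 \<otimes> inv (gfam a)) m0)"
    unfolding h_def using g0c by (simp add: act_mult m_assoc)
  finally show ?thesis using assms g0s by force
qed
end



lemma card_funs: "finite A \<Longrightarrow> card (A \<rightarrow>\<^sub>E (UNIV::'q::finite set)) = card (UNIV :: 'q set) ^ card A"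
  by (simp add: card_PiE)

lemma count_avoid:
  fixes Et :: "'t \<Rightarrow> 'm set" and p :: "'t \<Rightarrow> 'm \<Rightarrow> 'q::finite"
  assumes "finite T"
  shows "finite F \<Longrightarrow> (\<forall>t\<in>T. Et t \<subseteq> F \<and> card (Et t) = s \<and> p t \<in> Et t \<rightarrow>\<^sub>E UNIV) \<Longrightarrow>
    (\<forall>t\<in>T. \<forall>u\<in>T. t \<noteq> u \<longrightarrow> Et t \<inter> Et u = {}) \<Longrightarrow>
    real (card {f \<in> F \<rightarrow>\<^sub>E (UNIV::'q set). \<forall>t\<in>T. restrict f (Et t) \<noteq> p t})
      \<le> real (card (UNIV :: 'q set)) ^ card F * (1 - 1 / real (card (UNIV :: 'q set)) ^ s) ^ card T"
  using assms
proof (induction T arbitrary: F rule: finite_induct)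
  case empty
  then show ?case by (simp add: card_funs)
next
  case (insert t T F)
  define q where "q = real (card (UNIV :: 'q set))"
  have q0: "q > 0" unfolding q_def by (simp add: finite_UNIV_card_ge_0)
  define F' where "F' = F - Et t"
  have Et: "Et t \<subseteq> F" "card (Et t) = s" "p t \<in> Et t \<rightarrow>\<^sub>E UNIV" using insert.prems by auto
  have finEt: "finite (Et t)" using Et(1) insert.prems(1) finite_subset by blast
  have sub: "Et u \<subseteq> F'" if "u \<in> T" for u
  proof -
    have a: "Et u \<subseteq> F" using insert.prems(2) that by simp
    have "u \<noteq> t" using that insert.hyps(2) by blast
    then have "Et u \<inter> Et t = {}" using insert.prems(3) that by simp
    then show ?thesis using a unfolding F'_def by blast
  qed
  define A where "A = {f \<in> F \<rightarrow>\<^sub>E (UNIV::'q set). \<forall>u\<in>insert t T. restrict f (Et u) \<noteq> p u}"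
  define B where "B = {f \<in> F' \<rightarrow>\<^sub>E (UNIV::'q set). \<forall>u\<in>T. restrict f (Et u) \<noteq> p u}"
  define phi where "phi f = (restrict f F', restrict f (Et t))" for f :: "'m \<Rightarrow> 'q"
  have inj: "inj_on phi A"
  proof (rule inj_onI)
    fix f g assume "f \<in> A" "g \<in> A" "phi f = phi g"
    then have "f \<in> extensional F" "g \<in> extensional F" "restrict f F' = restrict g F'" "restrict f (Et t) = restrict g (Et t)"
      unfolding A_def phi_def by (auto simp: PiE_def)
    then show "f = g" unfolding F'_def
      by (metis (no_types, lifting) Diff_iff extensionalityI restrict_apply')
  qed
  have img: "phi ` A \<subseteq> B \<times> ((Et t \<rightarrow>\<^sub>E UNIV) - {p t})"
  proof
    fix z assume "z \<in> phi ` A"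
    then obtain f where f: "f \<in> A" "z = phi f" by blast
    have "restrict (restrict f F') (Et u) = restrict f (Et u)" if "u \<in> T" for u
      using sub[OF that] by (intro ext) (auto simp: restrict_def)
    then show "z \<in> B \<times> ((Et t \<rightarrow>\<^sub>E UNIV) - {p t})"
      using f unfolding A_def B_def phi_def by auto
  qed
  have finB: "finite B" unfolding B_def using insert.prems(1) unfolding F'_def
    by (intro finite_subset[OF _ finite_PiE]) auto
  have "card A \<le> card (B \<times> ((Et t \<rightarrow>\<^sub>E UNIV) - {p t}))"
    using card_inj_on_le[OF inj img] finB finEt by (simp add: finite_PiE)
  also have "\<dots> = card B * (card (UNIV :: 'q set) ^ s - 1)"
    using Et finEt by (simp add: card_cartesian_product card_Diff_singleton card_funs)
  finally have c0: "card A \<le> card B * (card (UNIV :: 'q set) ^ s - 1)" .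
  have Q1: "card (UNIV :: 'q set) ^ s \<ge> 1" by (simp add: finite_UNIV_card_ge_0 Suc_leI)
  have "real (card B * (card (UNIV :: 'q set) ^ s - 1)) = real (card B) * (q ^ s - 1)"
    using Q1 unfolding q_def by (simp add: of_nat_diff)
  then have c1: "real (card A) \<le> real (card B) * (q ^ s - 1)"
    using c0 by (metis of_nat_le_iff)
  have IH: "real (card B) \<le> q ^ card F' * (1 - 1 / q ^ s) ^ card T"
    unfolding B_def q_def
  proof (rule insert.IH)
    show "finite F'" using insert.prems(1) unfolding F'_def by simp
    show "\<forall>u\<in>T. Et u \<subseteq> F' \<and> card (Et u) = s \<and> p u \<in> Et u \<rightarrow>\<^sub>E UNIV"
      using sub insert.prems(2) by auto
    show "\<forall>u\<in>T. \<forall>v\<in>T. u \<noteq> v \<longrightarrow> Et u \<inter> Et v = {}"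
      using insert.prems(3) by auto
  qed
  have cardF': "card F' = card F - s"
    using Et finEt unfolding F'_def by (simp add: card_Diff_subset)
  have sle: "s \<le> card F" using Et insert.prems(1) by (metis card_mono)
  have cF: "q ^ card F' * q ^ s = q ^ card F"
    unfolding cardF' power_add[symmetric] using sle by simp
  have "q ^ s \<ge> 1" using q0 unfolding q_def by simp
  have "real (card A) \<le> q ^ card F' * (1 - 1 / q ^ s) ^ card T * (q ^ s - 1)"
  proof -
    have "real (card B) * (q ^ s - 1) \<le> q ^ card F' * (1 - 1 / q ^ s) ^ card T * (q ^ s - 1)"
      using IH \<open>q ^ s \<ge> 1\<close> by (intro mult_right_mono) auto
    then show ?thesis using c1 by linarith
  qed
  also have "\<dots> = (q ^ card F' * q ^ s) * (1 - 1 / q ^ s) ^ card T * (1 - 1 / q ^ s)"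
  proof -
    have "q ^ s > 0" using q0 by simp
    then have "q ^ s - 1 = q ^ s * (1 - 1 / q ^ s)" using q0 by (simp add: field_simps)
    then show ?thesis by (simp add: mult.assoc mult.left_commute)
  qed
  also have "\<dots> = q ^ card F * (1 - 1 / q ^ s) ^ card (insert t T)"
    using cF insert.hyps by simp
  finally show ?case unfolding A_def q_def .
qed



theorem theorem4:
  fixes G :: "('g, 'b) monoid_scheme" and act :: "'g \<Rightarrow> 'm \<Rightarrow> 'm" and m0 :: 'm
    and gfam :: "'m \<Rightarrow> 'g" and N :: "'g set set" and \<delta> :: "('g set \<Rightarrow> 'q::finite) \<Rightarrow> 'q"
    and rel :: "'i \<Rightarrow> 'i \<Rightarrow> bool" and F :: "'i \<Rightarrow> 'm set"
  assumes "cell_space G act m0 gfam"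
    and "right_amenable G act m0 gfam"
    and "finite (stab G act m0)"
    and "semi_cellular_automaton G act m0 N"
    and "finite N"
    and "right_folner_net G act m0 gfam rel F"
    and "bullet_invariant G act m0 N \<delta>"
    and "card (UNIV :: 'q set) \<ge> 2"
    and "\<not> surj (global_transition G act m0 gfam N \<delta>)"
  shows "entropy rel F (range (global_transition G act m0 gfam N \<delta>)) < ereal (ln (real (card (UNIV :: 'q set))))"
proof -
  interpret C: cs_ctx G act m0 gfam by unfold_locales (rule assms(1))
  interpret group G by (rule C.grp)
  define \<Delta> where "\<Delta> = global_transition G act m0 gfam N \<delta>"
  define S where "S = stab G act m0"
  define Q where "Q = real (card (UNIV::'q set))"
  have Q2: "Q \<ge> 2" using assms(8) unfolding Q_def by simp
  obtain y where y: "y \<notin> range \<Delta>" using assms(9) unfolding \<Delta>_def by blast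
  have "\<not> (\<forall>E. finite E \<longrightarrow> (\<exists>c. \<forall>m\<in>E. \<Delta> c m = y m))"
  proof
    assume H: "\<forall>E. finite E \<longrightarrow> (\<exists>c. \<forall>m\<in>E. \<Delta> c m = y m)"
    have "\<exists>c. \<Delta> c = y"
    proof (rule compact_realize[where D="\<lambda>m. (\<lambda>n. rsemi G act m0 gfam m n) ` N"])
      show "finite ((\<lambda>n. rsemi G act m0 gfam m n) ` N)" for m using assms(5) by simp
      show "\<Delta> c m = \<Delta> c' m" if "\<forall>x\<in>(\<lambda>n. rsemi G act m0 gfam m n) ` N. c x = c' x" for c c' m
      proof -
        have "restrict (\<lambda>n. c (rsemi G act m0 gfam m n)) N = restrict (\<lambda>n. c' (rsemi G act m0 gfam m n)) N"
          using that by (intro restrict_ext) auto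
        then show ?thesis unfolding \<Delta>_def global_transition_def by simp
      qed
      show "\<exists>c. \<forall>m\<in>E. \<Delta> c m = y m" if "finite E" for E using H that by blast
    qed
    then show False using y by auto
  qed
  then obtain E where E: "finite E" "\<And>c. \<exists>m\<in>E. \<Delta> c m \<noteq> y m" by blast
  have Ene: "E \<noteq> {}" using E(2) by blast
  have goe: "\<exists>e\<in>E. \<Delta> c (act (gfam t) e) \<noteq> y e" for c t
  proof -
    obtain e where "e\<in>E" "\<Delta> (\<lambda>x. c (act (gfam t) x)) e \<noteq> y e" using E(2) by blast
    moreover have "\<Delta> (\<lambda>x. c (act (gfam t) x)) e = \<Delta> c (act (gfam t) e)"
      unfolding \<Delta>_def by (rule C.equivariance[OF assms(4) assms(7)]) simp
    ultimately show ?thesis by auto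
  qed
  define W where "W = (\<lambda>(a,b,g0). act (gfam b \<otimes>\<^bsub>G\<^esub> g0 \<otimes>\<^bsub>G\<^esub> inv\<^bsub>G\<^esub> (gfam a)) m0) ` (E \<times> E \<times> S)"
  have finW: "finite W" using E(1) assms(3) unfolding W_def S_def by simp
  have Wne: "W \<noteq> {}" using Ene C.one_stab unfolding W_def S_def by auto
  define w where "w = card W"
  have w1: "w \<ge> 1" using finW Wne unfolding w_def by (simp add: Suc_leI card_gt_0_iff)
  define Et where "Et t = act (gfam t) ` E" for t
  have cardEt: "card (Et t) = card E" for t
    unfolding Et_def by (rule card_image[OF inj_on_subset[OF C.act_inj[OF C.gfam_carrier] subset_UNIV]])
  define s where "s = card E"
  have s1: "s \<ge> 1" using E(1) Ene unfolding s_def by (simp add: Suc_leI card_gt_0_iff)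
  define r where "r = 1 - 1 / Q ^ s"
  have Qs: "Q ^ s \<ge> 2" using Q2 s1
    by (metis dual_order.trans power_increasing one_le_numeral power_one_right)
  have r0: "r > 0" "r < 1" using Qs unfolding r_def by (auto simp: field_simps)
  have lnr: "ln r < 0" using r0 by simp
  define Cst where "Cst = ln Q + ln r / (2 * real w)"
  have Cst_lt: "Cst < ln Q" unfolding Cst_def using lnr w1 by (simp add: divide_neg_pos)
  define ratio where "ratio a i = real (card (F i - {m. rsemi G act m0 gfam m (gfam a <#\<^bsub>G\<^esub> S) \<in> F i})) / real (card (F i))" for a i
  have fol: "directed_set rel" "\<And>i. finite (F i) \<and> F i \<noteq> {}"
    "\<And>c. c \<in> cosets G act m0 \<Longrightarrow> ((\<lambda>i. real (card (F i - {m. rsemi G act m0 gfam m c \<in> F i})) / real (card (F i))) \<longlongrightarrow> 0) (net_filter rel)"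
    using assms(6) unfolding right_folner_net_def by auto
  have ev: "eventually (\<lambda>i. \<forall>a\<in>E. ratio a i < 1 / (2 * real s)) (net_filter rel)"
  proof (rule eventually_ball_finite[OF E(1)], intro ballI)
    fix a assume "a \<in> E"
    have "gfam a <#\<^bsub>G\<^esub> S \<in> cosets G act m0" unfolding cosets_def S_def by auto
    from fol(3)[OF this] have "((\<lambda>i. ratio a i) \<longlongrightarrow> 0) (net_filter rel)" unfolding ratio_def S_def .
    moreover have "(0::real) < 1 / (2 * real s)" using s1 by simp
    ultimately show "eventually (\<lambda>i. ratio a i < 1 / (2 * real s)) (net_filter rel)"
      by (rule order_tendstoD(2))
  qed
  have bound: "ln (real (card ((\<lambda>c. restrict c (F i)) ` range \<Delta>))) / real (card (F i)) \<le> Cst"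
    if hi: "\<forall>a\<in>E. ratio a i < 1 / (2 * real s)" for i
  proof -
    define FF where "FF = F i"
    have FF: "finite FF" "FF \<noteq> {}" using fol(2) unfolding FF_def by auto
    have FFpos: "real (card FF) > 0" using FF by (simp add: card_gt_0_iff)
    define Inn where "Inn = {t \<in> FF. Et t \<subseteq> FF}"
    have IntF: "Inn \<subseteq> FF" unfolding Inn_def by blast
    define Bad where "Bad a = FF - {m. rsemi G act m0 gfam m (gfam a <#\<^bsub>G\<^esub> S) \<in> FF}" for a
    have rs: "rsemi G act m0 gfam m (gfam a <#\<^bsub>G\<^esub> S) = act (gfam m) a" for m a
      using C.rsemi_rep[of "gfam a" "gfam a <#\<^bsub>G\<^esub> S" m] unfolding S_def by (simp add: C.act_mult)
    have "FF - Inn \<subseteq> (\<Union>a\<in>E. Bad a)"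
      unfolding Inn_def Bad_def Et_def rs by auto
    then have "card (FF - Inn) \<le> card (\<Union>a\<in>E. Bad a)"
      using FF E(1) unfolding Bad_def by (intro card_mono) auto
    also have "\<dots> \<le> (\<Sum>a\<in>E. card (Bad a))" using E(1) by (rule card_UN_le)
    finally have c1: "real (card (FF - Inn)) \<le> (\<Sum>a\<in>E. real (card (Bad a)))"
      by (metis of_nat_le_iff of_nat_sum)
    have "real (card (Bad a)) < real (card FF) / (2 * real s)" if "a \<in> E" for a
    proof -
      have "real (card (Bad a)) / real (card FF) < 1 / (2 * real s)"
        using hi that unfolding ratio_def Bad_def FF_def by auto
      then show ?thesis using FFpos s1 by (simp add: field_simps)
    qed
    then have "(\<Sum>a\<in>E. real (card (Bad a))) < (\<Sum>a\<in>E. real (card FF) / (2 * real s))"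
      using E(1) Ene by (intro sum_strict_mono) auto
    also have "\<dots> = real (card FF) / 2" using s1 unfolding s_def by simp
    finally have c2: "real (card (FF - Inn)) < real (card FF) / 2" using c1 by linarith
    have "card FF = card Inn + card (FF - Inn)"
      using FF IntF by (metis card_Diff_subset card_mono finite_subset le_add_diff_inverse)
    then have IntBig: "real (card FF) < 2 * real (card Inn)" using c2 by simp
    define Fam where "Fam = {T. T \<subseteq> Inn \<and> (\<forall>t\<in>T. \<forall>u\<in>T. t \<noteq> u \<longrightarrow> Et t \<inter> Et u = {})}"
    have finInt: "finite Inn" using FF IntF finite_subset by blast
    obtain T where T: "T \<in> Fam" "\<And>T'. T' \<in> Fam \<Longrightarrow> card T' \<le> card T"
    proof -
      have "{} \<in> Fam" unfolding Fam_def by simp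
      moreover have "\<forall>T'. T' \<in> Fam \<longrightarrow> card T' < card Inn + 1"
        unfolding Fam_def using finInt by (auto simp: card_mono le_imp_less_Suc)
      ultimately obtain T where "T \<in> Fam" "\<forall>T'. T' \<in> Fam \<longrightarrow> card T' \<le> card T"
        using ex_has_greatest_nat[of "\<lambda>T. T \<in> Fam" "{}" card "card Inn + 1"] by blast
      then show ?thesis using that by blast
    qed
    have TInt: "T \<subseteq> Inn" and Tdisj: "\<forall>t\<in>T. \<forall>u\<in>T. t \<noteq> u \<longrightarrow> Et t \<inter> Et u = {}"
      using T(1) unfolding Fam_def by auto
    have finT: "finite T" using finInt TInt finite_subset by blast
    have cover: "Inn \<subseteq> (\<Union>u\<in>T. act (gfam u) ` W)"
    proof
      fix x assume x: "x \<in> Inn"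
      have "\<exists>u\<in>T. Et x \<inter> Et u \<noteq> {}"
      proof (cases "x \<in> T")
        case True
        then show ?thesis using Ene unfolding Et_def by auto
      next
        case False
        show ?thesis
        proof (rule ccontr)
          assume "\<not> ?thesis"
          then have "insert x T \<in> Fam" using x TInt Tdisj unfolding Fam_def by auto
          then have "card (insert x T) \<le> card T" by (rule T(2))
          then show False using False finT by simp
        qed
      qed
      then obtain u a b where "u \<in> T" "a \<in> E" "b \<in> E" "act (gfam x) a = act (gfam u) b"
        unfolding Et_def by blast
      then show "x \<in> (\<Union>u\<in>T. act (gfam u) ` W)"
        using C.overlap[of a E b x u] unfolding W_def S_def by blast
    qed
    have "card Inn \<le> card (\<Union>u\<in>T. act (gfam u) ` W)"
      using cover finT finW by (intro card_mono) auto
    also have "\<dots> \<le> (\<Sum>u\<in>T. card (act (gfam u) ` W))" using finT by (rule card_UN_le)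
    also have "\<dots> \<le> (\<Sum>u\<in>T. w)" unfolding w_def by (intro sum_mono card_image_le finW)
    finally have "card Inn \<le> card T * w" by simp
    then have "real (card Inn) \<le> real (card T) * real w" by (metis of_nat_le_iff of_nat_mult)
    then have Tbig: "real (card FF) / (2 * real w) \<le> real (card T)"
      using IntBig w1 by (simp add: field_simps)
    define p where "p u = restrict (\<lambda>x. y (act (inv\<^bsub>G\<^esub> (gfam u)) x)) (Et u)" for u
    define Avoid where "Avoid = {f \<in> FF \<rightarrow>\<^sub>E (UNIV::'q set). \<forall>t\<in>T. restrict f (Et t) \<noteq> p t}"
    define Img where "Img = (\<lambda>c. restrict c (F i)) ` range \<Delta>"
    have ImgA: "Img \<subseteq> Avoid"
    proof
      fix f assume "f \<in> Img"
      then obtain c where f: "f = restrict (\<Delta> c) FF" unfolding Img_def FF_def by blast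
      have "restrict f (Et t) \<noteq> p t" if "t \<in> T" for t
      proof
        assume eq: "restrict f (Et t) = p t"
        have EtF: "Et t \<subseteq> FF" using that TInt unfolding Inn_def by auto
        obtain e where e: "e \<in> E" "\<Delta> c (act (gfam t) e) \<noteq> y e" using goe by blast
        have "act (gfam t) e \<in> Et t" using e unfolding Et_def by blast
        then have "restrict f (Et t) (act (gfam t) e) = \<Delta> c (act (gfam t) e)"
          using EtF f by auto
        moreover have "p t (act (gfam t) e) = y e"
          using \<open>act (gfam t) e \<in> Et t\<close> unfolding p_def by simp
        ultimately show False using eq e by simp
      qed
      then show "f \<in> Avoid" unfolding Avoid_def f by auto
    qed
    have finA: "finite Avoid" unfolding Avoid_def using FF
      by (intro finite_subset[OF _ finite_PiE[of FF "\<lambda>_. UNIV::'q set"]]) auto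
    have Imgne: "Img \<noteq> {}" unfolding Img_def by simp
    have K1: "real (card Img) \<ge> 1"
      using finA ImgA Imgne by (simp add: Suc_leI card_gt_0_iff finite_subset)
    have "real (card Img) \<le> real (card Avoid)" using card_mono[OF finA ImgA] by simp
    also have "\<dots> \<le> Q ^ card FF * r ^ card T"
      unfolding Avoid_def Q_def r_def
    proof (rule count_avoid[OF finT FF(1)])
      show "\<forall>t\<in>T. Et t \<subseteq> FF \<and> card (Et t) = s \<and> p t \<in> Et t \<rightarrow>\<^sub>E UNIV"
        using TInt cardEt unfolding Inn_def s_def p_def by auto
      show "\<forall>t\<in>T. \<forall>u\<in>T. t \<noteq> u \<longrightarrow> Et t \<inter> Et u = {}" by (rule Tdisj)
    qed
    finally have Kle: "real (card Img) \<le> Q ^ card FF * r ^ card T" .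
    have Qpos: "Q > 0" using Q2 by simp
    have "ln (real (card Img)) \<le> ln (Q ^ card FF * r ^ card T)"
      using K1 Kle by (subst ln_le_cancel_iff) auto
    also have "\<dots> = real (card FF) * ln Q + real (card T) * ln r"
      using Qpos r0 by (simp add: ln_mult ln_realpow)
    also have "\<dots> \<le> real (card FF) * ln Q + (real (card FF) / (2 * real w)) * ln r"
      using mult_right_mono_neg[OF Tbig, of "ln r"] lnr by simp
    also have "\<dots> = real (card FF) * Cst" unfolding Cst_def by (simp add: field_simps)
    finally have "ln (real (card Img)) \<le> real (card FF) * Cst" .
    then show ?thesis using FFpos unfolding Img_def FF_def by (simp add: divide_le_eq mult.commute)
  qed
  have "entropy rel F (range \<Delta>) \<le> ereal Cst"
    unfolding entropy_def
  proof (rule Limsup_bounded)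
    show "eventually (\<lambda>i. ereal (ln (real (card ((\<lambda>c. restrict c (F i)) ` range \<Delta>))) / real (card (F i))) \<le> ereal Cst) (net_filter rel)"
      using ev by (rule eventually_mono) (simp add: bound)
  qed
  also have "\<dots> < ereal (ln Q)" using Cst_lt by simp
  finally show ?thesis unfolding \<Delta>_def Q_def .
qed


end
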